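(* Let $X$ and $Y$ be compact metric spaces and $G_{X}$ and $G_{Y}$ closed subgroups of $\mathrm{Isom}(X)$ and $\mathrm{Isom}(Y)$ respectively. An $\epsilon$-equivariant approximation $(f,\theta,\psi)$ between $(X,G_{X})$ and $(Y,G_{Y})$ induces an $\tilde{\epsilon}$-equivariant approximation $(f_{\#},\theta_{\#},\psi_{\#})$ between $(\mathbb{P}_2(X),G_{X}^{\#})$ and $(\mathbb{P}_2(Y),G_{Y}^{\#})$, where $\tilde{\epsilon}$ tends to $0$ as $\epsilon$ tends to $0$.
   Context: $\mathrm{Isom}(X)$ denotes the isometry group of $X$. $\mathbb{P}_2(X)$ is the Wasserstein space over $X$ with the $2$-Wasserstein metric. For a closed subgroup $G$ of $\mathrm{Isom}(X)$, $G^{\#}$ is the induced subgroup of $\mathrm{Isom}(\mathbb{P}_2(X))$ consisting of push-forwards $g_{\#}$. An $\epsilon$-equivariant approximation $(f\colon X\to Y,\theta\colon G_X\to G_Y,\psi\colon G_Y\to G_X)$ is in Fukaya's sense (f is an $\epsilon$-Gromov--Hausdorff approximation and $d(\theta(g)f(x),f(gx))\le\epsilon$, $d(\psi(\lambda)x, \dots)$ similarly); maps may be taken measurable. Here $\theta_{\#}(g_{\#})=(\theta(g))_{\#}$ and $\psi_{\#}(\lambda_{\#})=(\psi(\lambda))_{\#}$, and one may take $\tilde\epsilon=6\epsilon+\sqrt{\epsilon(2\,\mathrm{diam}(Y)+\epsilon)}$. *)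

theory Defs
  imports "HOL-Probability.Probability"
begin

definition Isom :: "('a::metric_space \<Rightarrow> 'a) set" where
  "Isom = {g. bij g \<and> (\<forall>x y. dist (g x) (g y) = dist x y)}"

text \<open>Closed subgroup of the isometry group; the topology on Isom(X) of a compact
  metric space X is the compact-open topology = topology of uniform convergence.\<close>
definition closed_isom_subgroup :: "('a::metric_space \<Rightarrow> 'a) set \<Rightarrow> bool" where
  "closed_isom_subgroup G \<longleftrightarrow>
     G \<subseteq> Isom \<and> id \<in> G \<and> (\<forall>g\<in>G. \<forall>h\<in>G. g \<circ> h \<in> G) \<and> (\<forall>g\<in>G. inv g \<in> G) \<and>
     (\<forall>s g. (\<forall>n. s n \<in> G) \<and> uniform_limit UNIV s g sequentially \<longrightarrow> g \<in> G)"

text \<open>Borel probability measures; on a compact space every such measure has finite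
  second moment, so this is the underlying set of P_2(X).\<close>
definition P2 :: "'a::metric_space measure set" where
  "P2 = {\<mu>. prob_space \<mu> \<and> sets \<mu> = sets (borel :: 'a measure)}"

definition couplings :: "'a::metric_space measure \<Rightarrow> 'a measure \<Rightarrow> ('a \<times> 'a) measure set" where
  "couplings \<mu> \<nu> = {\<pi>. sets \<pi> = sets (borel :: ('a \<times> 'a) measure) \<and>
                        distr \<pi> borel fst = \<mu> \<and> distr \<pi> borel snd = \<nu>}"

definition W2 :: "'a::metric_space measure \<Rightarrow> 'a measure \<Rightarrow> real" where
  "W2 \<mu> \<nu> = sqrt (INF \<pi>\<in>couplings \<mu> \<nu>. \<integral>p. (dist (fst p) (snd p))\<^sup>2 \<partial>\<pi>)"

definition push :: "('a::topological_space \<Rightarrow> 'b::topological_space) \<Rightarrow> 'a measure \<Rightarrow> 'b measure" where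
  "push f \<mu> = distr \<mu> borel f"

definition induced_group :: "('a::metric_space \<Rightarrow> 'a) set \<Rightarrow> ('a measure \<Rightarrow> 'a measure) set" where
  "induced_group G = push ` G"

definition induced_hom ::
  "('a::metric_space \<Rightarrow> 'a) set \<Rightarrow> (('a \<Rightarrow> 'a) \<Rightarrow> ('b::metric_space \<Rightarrow> 'b))
     \<Rightarrow> ('a measure \<Rightarrow> 'a measure) \<Rightarrow> ('b measure \<Rightarrow> 'b measure)" where
  "induced_hom G \<theta> h = push (\<theta> (SOME g. g \<in> G \<and> push g = h))"

definition equivariant_approx ::
  "('a \<Rightarrow> 'a \<Rightarrow> real) \<Rightarrow> 'a set \<Rightarrow> ('a \<Rightarrow> 'a) set \<Rightarrow>
   ('b \<Rightarrow> 'b \<Rightarrow> real) \<Rightarrow> 'b set \<Rightarrow> ('b \<Rightarrow> 'b) set \<Rightarrow>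
   ('a \<Rightarrow> 'b) \<Rightarrow> (('a \<Rightarrow> 'a) \<Rightarrow> ('b \<Rightarrow> 'b)) \<Rightarrow> (('b \<Rightarrow> 'b) \<Rightarrow> ('a \<Rightarrow> 'a)) \<Rightarrow> real \<Rightarrow> bool" where
  "equivariant_approx dX X GX dY Y GY f \<theta> \<psi> \<epsilon> \<longleftrightarrow>
     f ` X \<subseteq> Y \<and> \<theta> ` GX \<subseteq> GY \<and> \<psi> ` GY \<subseteq> GX \<and>
     (\<forall>x\<in>X. \<forall>x'\<in>X. \<bar>dY (f x) (f x') - dX x x'\<bar> \<le> \<epsilon>) \<and>
     (\<forall>y\<in>Y. \<exists>x\<in>X. dY (f x) y \<le> \<epsilon>) \<and>
     (\<forall>g\<in>GX. \<forall>x\<in>X. dY (\<theta> g (f x)) (f (g x)) \<le> \<epsilon>) \<and>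
     (\<forall>l\<in>GY. \<forall>x\<in>X. dY (l (f x)) (f (\<psi> l x)) \<le> \<epsilon>)"

end

theory Submission
  imports Defs
begin

lemma cpt_countable_basis:
  assumes "compact (UNIV :: 'a::metric_space set)"
  shows "\<exists>B::'a set set. countable B \<and> topological_basis B"
proof -
  have "\<forall>n::nat. \<exists>k. finite k \<and> (UNIV::'a set) \<subseteq> (\<Union>x\<in>k. ball x (1/(Suc n)))"
    using seq_compact_imp_totally_bounded[OF compact_imp_seq_compact[OF assms]] by simp
  then obtain K where K: "\<And>n. finite (K n)" "\<And>n. (UNIV::'a set) \<subseteq> (\<Union>x\<in>K n. ball x (1/(Suc n)))"
    by metis
  define B where "B = (\<Union>n. (\<lambda>x. ball x (1/(Suc n))) ` K n)"
  have "countable B" unfolding B_def using K(1) by (intro countable_UN) (auto intro: countable_finite)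
  moreover have "topological_basis B"
  proof (rule topological_basisI)
    fix U :: "'a set" assume "U \<in> B" then show "open U" by (auto simp: B_def)
  next
    fix U :: "'a set" and x assume "open U" "x \<in> U"
    then obtain e where e: "e > 0" "ball x e \<subseteq> U" by (meson open_contains_ball)
    obtain n :: nat where n: "1 / real (Suc n) < e/2"
      using e by (metis half_gt_zero_iff nat_approx_posE)
    obtain c where c: "c \<in> K n" "x \<in> ball c (1/(Suc n))" using K(2)[of n] by blast
    have "ball c (1/(Suc n)) \<subseteq> U"
    proof
      fix z assume "z \<in> ball c (1/(Suc n))"
      then have "dist x z < e" using c n dist_triangle[of x z c] by (simp add: dist_commute)
      then show "z \<in> U" using e by auto
    qed
    then show "\<exists>B'\<in>B. x \<in> B' \<and> B' \<subseteq> U" using c by (auto simp: B_def)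
  qed
  ultimately show ?thesis by blast
qed

lemma borel_prod_cpt:
  assumes "compact (UNIV :: 'a::metric_space set)" "compact (UNIV :: 'b::metric_space set)"
  shows "sets (borel :: ('a \<times> 'b) measure) = sets (borel \<Otimes>\<^sub>M borel)"
proof
  obtain BA :: "'a set set" where A: "countable BA" "topological_basis BA"
    using cpt_countable_basis[OF assms(1)] by blast
  obtain BB :: "'b set set" where B: "countable BB" "topological_basis BB"
    using cpt_countable_basis[OF assms(2)] by blast
  let ?P = "(\<lambda>(a, b). a \<times> b) ` (BA \<times> BB)"
  have "borel = sigma UNIV ?P"
    by (rule borel_eq_countable_basis) (use A B in \<open>auto intro: topological_basis_prod\<close>)
  moreover have "sets (sigma UNIV ?P) \<subseteq> sets (borel \<Otimes>\<^sub>M borel)"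
  proof (rule sigma_le_sets[THEN iffD2], safe)
    show "UNIV \<in> sets (borel \<Otimes>\<^sub>M borel)" by (metis sets.top space_borel space_pair_measure UNIV_Times_UNIV)
    fix a b assume "a \<in> BA" "b \<in> BB"
    then show "a \<times> b \<in> sets (borel \<Otimes>\<^sub>M borel)"
      using A(2) B(2) by (auto intro!: pair_measureI simp: topological_basis_open)
  qed auto
  ultimately show "sets (borel :: ('a \<times> 'b) measure) \<subseteq> sets (borel \<Otimes>\<^sub>M borel)" by simp
next
  have "(\<lambda>x. (fst x, snd x)) \<in> measurable (borel :: ('a \<times> 'b) measure) (borel \<Otimes>\<^sub>M borel)"
    by (intro measurable_Pair borel_measurable_continuous_onI continuous_intros)
  then have "id \<in> measurable (borel :: ('a \<times> 'b) measure) (borel \<Otimes>\<^sub>M borel)" by (simp add: id_def)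
  then show "sets (borel \<Otimes>\<^sub>M borel) \<subseteq> sets (borel :: ('a \<times> 'b) measure)"
    by (metis measurable_sets space_borel subsetI vimage_id Int_UNIV_right id_apply)
qed


definition cst :: "('a::metric_space \<times> 'a) measure \<Rightarrow> real" where
  "cst \<pi> = (\<integral>p. (dist (fst p) (snd p))\<^sup>2 \<partial>\<pi>)"

lemma W2_cst: "W2 \<mu> \<nu> = sqrt (Inf (cst ` couplings \<mu> \<nu>))"
  unfolding W2_def cst_def by simp


lemma P2_prob: "\<mu> \<in> P2 \<Longrightarrow> prob_space \<mu>"
  unfolding P2_def by auto

lemma P2_sets: "\<mu> \<in> P2 \<Longrightarrow> sets \<mu> = sets borel"
  unfolding P2_def by auto

lemma P2_space: "\<mu> \<in> P2 \<Longrightarrow> space \<mu> = UNIV"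
  by (metis P2_sets sets_eq_imp_space_eq space_borel)

lemma coupling_sets: "\<pi> \<in> couplings \<mu> \<nu> \<Longrightarrow> sets \<pi> = sets borel"
  unfolding couplings_def by auto

lemma coupling_space: "\<pi> \<in> couplings \<mu> \<nu> \<Longrightarrow> space \<pi> = UNIV"
  by (metis coupling_sets sets_eq_imp_space_eq space_borel)

lemma meas_sets_borel:
  "sets M = sets borel \<Longrightarrow> g \<in> borel_measurable borel \<Longrightarrow> g \<in> borel_measurable M"
  using measurable_cong_sets[of M borel borel borel] by simp

lemma coupling_prob:
  assumes "\<pi> \<in> couplings \<mu> \<nu>" "\<mu> \<in> P2"
  shows "prob_space \<pi>"
proof
  have s: "sets \<pi> = sets borel" "space \<pi> = UNIV"
    using assms(1) by (auto simp: coupling_sets coupling_space)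
  have m: "fst \<in> measurable \<pi> borel"
    by (rule meas_sets_borel[OF s(1)]) (intro borel_measurable_continuous_onI continuous_intros)
  have "emeasure \<pi> (space \<pi>) = emeasure (distr \<pi> borel fst) UNIV"
    using m by (subst emeasure_distr) (auto simp: s)
  also have "\<dots> = emeasure \<mu> (space \<mu>)"
    using assms by (simp add: couplings_def P2_space)
  also have "\<dots> = 1" using assms(2) by (simp add: P2_prob prob_space.emeasure_space_1)
  finally show "emeasure \<pi> (space \<pi>) = 1" .
qed

lemma cost_meas: "(\<lambda>p::'a::metric_space \<times> 'a. (dist (fst p) (snd p))\<^sup>2) \<in> borel_measurable borel"
  by (intro borel_measurable_continuous_onI continuous_intros)

lemma cst_nonneg: "0 \<le> cst \<pi>"
  unfolding cst_def by (rule integral_nonneg_AE) auto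

lemma bdd_cst: "bdd_below (cst ` S)"
  by (rule bdd_belowI[of _ 0]) (auto simp: cst_nonneg)

lemma W2_le_cst: "\<pi> \<in> couplings \<mu> \<nu> \<Longrightarrow> W2 \<mu> \<nu> \<le> sqrt (cst \<pi>)"
  unfolding W2_cst by (intro real_sqrt_le_mono cInf_lower bdd_cst) auto

lemma Inf_cst_nonneg: "couplings \<mu> \<nu> \<noteq> {} \<Longrightarrow> 0 \<le> Inf (cst ` couplings \<mu> \<nu>)"
  by (intro cInf_greatest) (auto simp: cst_nonneg)

lemma Inf_cst_ge: "couplings \<mu> \<nu> \<noteq> {} \<Longrightarrow> (\<And>\<pi>. \<pi> \<in> couplings \<mu> \<nu> \<Longrightarrow> b \<le> cst \<pi>) \<Longrightarrow> b \<le> Inf (cst ` couplings \<mu> \<nu>)"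
  by (intro cInf_greatest) auto

lemma Inf_cst_le: "\<pi> \<in> couplings \<mu> \<nu> \<Longrightarrow> Inf (cst ` couplings \<mu> \<nu>) \<le> cst \<pi>"
  by (intro cInf_lower bdd_cst) auto

lemma couplings_ne:
  assumes cpt: "compact (UNIV :: 'a::metric_space set)" and P: "\<mu> \<in> P2" "\<nu> \<in> P2"
  shows "(\<mu> \<Otimes>\<^sub>M \<nu>) \<in> couplings \<mu> (\<nu> :: 'a measure)"
proof -
  interpret m: prob_space \<mu> using P by (simp add: P2_prob)
  interpret n: prob_space \<nu> using P by (simp add: P2_prob)
  interpret pp: pair_prob_space \<mu> \<nu> ..
  have sp: "sets (\<mu> \<Otimes>\<^sub>M \<nu>) = sets (borel :: ('a \<times> 'a) measure)"
    using borel_prod_cpt[OF cpt cpt] P by (simp add: P2_sets cong: sets_pair_measure_cong)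
  have "distr (\<mu> \<Otimes>\<^sub>M \<nu>) borel fst = distr (\<mu> \<Otimes>\<^sub>M \<nu>) \<mu> fst"
    by (rule distr_cong) (auto simp: P P2_sets)
  also have "\<dots> = \<mu>" by (rule n.distr_pair_fst)
  finally have 1: "distr (\<mu> \<Otimes>\<^sub>M \<nu>) borel fst = \<mu>" .
  have "distr (\<mu> \<Otimes>\<^sub>M \<nu>) borel snd = distr (\<mu> \<Otimes>\<^sub>M \<nu>) \<nu> snd"
    by (rule distr_cong) (auto simp: P P2_sets)
  also have "\<dots> = \<nu>"
  proof (rule measure_eqI)
    fix A assume A: "A \<in> sets (distr (\<mu> \<Otimes>\<^sub>M \<nu>) \<nu> snd)"
    then have "emeasure (distr (\<mu> \<Otimes>\<^sub>M \<nu>) \<nu> snd) A = emeasure (\<mu> \<Otimes>\<^sub>M \<nu>) (space \<mu> \<times> A)"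
      by (auto simp add: emeasure_distr space_pair_measure dest: sets.sets_into_space intro!: arg_cong2[where f=emeasure])
    with A show "emeasure (distr (\<mu> \<Otimes>\<^sub>M \<nu>) \<nu> snd) A = emeasure \<nu> A"
      by (simp add: n.emeasure_pair_measure_Times m.emeasure_space_1)
  qed simp
  finally have 2: "distr (\<mu> \<Otimes>\<^sub>M \<nu>) borel snd = \<nu>" .
  show ?thesis using sp 1 2 by (simp add: couplings_def)
qed

lemma sqrt_diff_le: "0 \<le> a \<Longrightarrow> 0 \<le> b \<Longrightarrow> \<bar>a - b\<bar> \<le> c \<Longrightarrow> \<bar>sqrt a - sqrt b\<bar> \<le> sqrt c"
proof -
  assume a: "0 \<le> a" "0 \<le> b" "\<bar>a - b\<bar> \<le> c"
  have s: "0 \<le> sqrt a" "0 \<le> sqrt b" using a by auto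
  have "\<bar>sqrt a - sqrt b\<bar> \<le> sqrt a + sqrt b"
    using s by (simp add: abs_le_iff)
  then have "\<bar>sqrt a - sqrt b\<bar> * \<bar>sqrt a - sqrt b\<bar> \<le> \<bar>sqrt a - sqrt b\<bar> * (sqrt a + sqrt b)"
    by (intro mult_left_mono) auto
  also have "\<dots> = \<bar>(sqrt a - sqrt b) * (sqrt a + sqrt b)\<bar>"
    using s by (simp add: abs_mult)
  also have "(sqrt a - sqrt b) * (sqrt a + sqrt b) = sqrt a * sqrt a - sqrt b * sqrt b"
    by (simp add: algebra_simps)
  also have "\<dots> = a - b" using a by simp
  finally have "\<bar>sqrt a - sqrt b\<bar> * \<bar>sqrt a - sqrt b\<bar> \<le> c" using a by linarith
  then have "\<bar>sqrt a - sqrt b\<bar>\<^sup>2 \<le> c" by (simp add: power2_eq_square)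
  then show ?thesis by (metis abs_ge_zero real_le_rsqrt)
qed

lemma level_set_sets:
  fixes h :: "'a \<Rightarrow> nat"
  assumes h: "h \<in> measurable M (count_space UNIV)"
  shows "{x\<in>space M. h x = i} \<in> sets M"
proof -
  have "h -` {i} \<inter> space M \<in> sets M" using measurable_sets[OF h] by simp
  moreover have "{x\<in>space M. h x = i} = h -` {i} \<inter> space M" by auto
  ultimately show ?thesis by simp
qed

lemma measure_split1:
  fixes h :: "'a \<Rightarrow> nat"
  assumes fm: "finite_measure M" and h: "h \<in> measurable M (count_space UNIV)"
    and hN: "\<And>x. x \<in> space M \<Longrightarrow> h x < N" and S: "S \<in> sets M"
  shows "measure M S = (\<Sum>i<N. measure M (S \<inter> {x\<in>space M. h x = i}))"
proof -
  have "S = (\<Union>i\<in>{..<N}. S \<inter> {x\<in>space M. h x = i})"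
    using sets.sets_into_space[OF S] hN by auto
  then have "measure M S = measure M (\<Union>i\<in>{..<N}. S \<inter> {x\<in>space M. h x = i})" by simp
  also have "\<dots> = (\<Sum>i<N. measure M (S \<inter> {x\<in>space M. h x = i}))"
    using S level_set_sets[OF h] finite_measure.emeasure_finite[OF fm]
    by (intro measure_finite_Union) (auto simp: disjoint_family_on_def)
  finally show ?thesis .
qed

lemma integral_index2:
  fixes h1 h2 :: "'a \<Rightarrow> nat" and G :: "nat \<Rightarrow> nat \<Rightarrow> real"
  assumes fm: "finite_measure M" and h1: "h1 \<in> measurable M (count_space UNIV)"
    and h2: "h2 \<in> measurable M (count_space UNIV)"
    and hN: "\<And>x. x \<in> space M \<Longrightarrow> h1 x < N \<and> h2 x < N" and S: "S \<in> sets M"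
  shows "(\<integral>x. indicator S x * G (h1 x) (h2 x) \<partial>M) =
         (\<Sum>i<N. \<Sum>j<N. G i j * measure M (S \<inter> {x\<in>space M. h1 x = i \<and> h2 x = j}))"
proof -
  let ?T = "\<lambda>i j. S \<inter> {x\<in>space M. h1 x = i \<and> h2 x = j}"
  have T: "?T i j \<in> sets M" for i j
  proof -
    have "?T i j = S \<inter> {x\<in>space M. h1 x = i} \<inter> {x\<in>space M. h2 x = j}" by auto
    then show ?thesis using S level_set_sets[OF h1] level_set_sets[OF h2] by auto
  qed
  have calc1: "(\<integral>x. indicator S x * G (h1 x) (h2 x) \<partial>M) = (\<integral>x. (\<Sum>i<N. \<Sum>j<N. G i j * indicator (?T i j) x) \<partial>M)"
  proof (rule Bochner_Integration.integral_cong, rule refl)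
    fix x assume x: "x \<in> space M"
    have "(\<Sum>i<N. \<Sum>j<N. G i j * indicator (?T i j) x) =
          (\<Sum>i<N. (if i = h1 x then (\<Sum>j<N. (if j = h2 x then G i j * indicator S x else 0)) else 0))"
      using x by (intro sum.cong refl) (auto simp: indicator_def intro!: sum.neutral)
    also have "\<dots> = indicator S x * G (h1 x) (h2 x)" using hN[OF x] by simp
    finally show "indicator S x * G (h1 x) (h2 x) = (\<Sum>i<N. \<Sum>j<N. G i j * indicator (?T i j) x)" by simp
  qed
  have int: "integrable M (\<lambda>x. G i j * indicator (?T i j) x)" for i j
    using T finite_measure.emeasure_finite[OF fm]
    by (intro integrable_mult_right integrable_real_indicator) (auto simp: top.not_eq_extremum)
  have "(\<integral>x. (\<Sum>i<N. \<Sum>j<N. G i j * indicator (?T i j) x) \<partial>M) = (\<Sum>i<N. \<integral>x. (\<Sum>j<N. G i j * indicator (?T i j) x) \<partial>M)"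
    by (rule Bochner_Integration.integral_sum) (rule Bochner_Integration.integrable_sum, rule int)
  also have "\<dots> = (\<Sum>i<N. \<Sum>j<N. \<integral>x. G i j * indicator (?T i j) x \<partial>M)"
    by (intro sum.cong refl Bochner_Integration.integral_sum int)
  also have "\<dots> = (\<Sum>i<N. \<Sum>j<N. G i j * measure M (?T i j))"
    using T by (intro sum.cong refl) (simp add: sets.Int_space_eq2)
  finally have "(\<integral>x. (\<Sum>i<N. \<Sum>j<N. G i j * indicator (?T i j) x) \<partial>M) = (\<Sum>i<N. \<Sum>j<N. G i j * measure M (?T i j))" .
  from calc1 this show ?thesis by (rule trans)
qed

lemma net_index:
  assumes cpt: "compact (UNIV::'b::metric_space set)" and r: "r > 0"
  obtains N :: nat and c :: "nat \<Rightarrow> 'b::metric_space" and k :: "'b::metric_space \<Rightarrow> nat"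
  where "\<And>y. k y < N" "\<And>y. dist y (c (k y)) < r" "k \<in> measurable borel (count_space UNIV)"
proof -
  have tb: "\<exists>K. finite K \<and> K \<subseteq> UNIV \<and> (UNIV::'b set) \<subseteq> (\<Union>x\<in>K. ball x r)"
    by (rule seq_compact_imp_totally_bounded[OF compact_imp_seq_compact[OF cpt], rule_format, OF r])
  obtain K where K: "finite K" "(UNIV::'b set) \<subseteq> (\<Union>x\<in>K. ball x r)"
    using tb by (elim exE conjE) blast
  obtain N :: nat and c where Kc: "K = c ` {i. i < N}" using finite_conv_nat_seg_image[THEN iffD1, OF K(1)] by (elim exE) blast
  define k where "k y = (LEAST i. i < N \<and> dist y (c i) < r)" for y
  have ex: "\<exists>i. i < N \<and> dist y (c i) < r" for y
  proof -
    obtain x where "x \<in> K" "y \<in> ball x r" using K(2) by blast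
    then show ?thesis using Kc by (auto simp: dist_commute)
  qed
  have kp: "k y < N \<and> dist y (c (k y)) < r" for y
    unfolding k_def by (rule LeastI_ex[OF ex[of y]])
  have "k \<in> measurable borel (count_space UNIV)"
    unfolding k_def
  proof (rule measurable_Least)
    fix i
    have "{y \<in> space borel. i < N \<and> dist y (c i) < r} = (if i < N then ball (c i) r else {})"
      by (auto simp: ball_def dist_commute)
    then have "{y \<in> space borel. i < N \<and> dist y (c i) < r} \<in> sets borel" by simp
    then show "(\<lambda>y. i < N \<and> dist y (c i) < r) \<in> measurable borel (count_space UNIV)"
      by (simp only: pred_def)
  qed
  then show ?thesis using kp that by blast
qed

lemma push_P2:
  assumes f: "f \<in> borel_measurable borel" and P: "\<mu> \<in> P2"
  shows "push f \<mu> \<in> P2"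
proof -
  have fm: "f \<in> measurable \<mu> borel" by (rule meas_sets_borel[OF P2_sets[OF P] f])
  have "prob_space (distr \<mu> borel f)"
    by (rule prob_space.prob_space_distr[OF P2_prob[OF P] fm])
  then show ?thesis unfolding P2_def push_def by simp
qed

lemma pair_measure_times:
  assumes "prob_space M" "prob_space N" "X \<in> sets M" "Y \<in> sets N"
  shows "measure (M \<Otimes>\<^sub>M N) (X \<times> Y) = measure M X * measure N Y"
proof -
  interpret N: prob_space N by fact
  show ?thesis using assms by (simp add: measure_def N.emeasure_pair_measure_Times enn2real_mult)
qed

lemma prob_fm: "prob_space M \<Longrightarrow> finite_measure M"
  by (rule finite_measureI) (simp add: prob_space.emeasure_space_1)

lemma prob_pair: assumes "prob_space M" "prob_space N" shows "prob_space (M \<Otimes>\<^sub>M N)"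
proof -
  interpret M: prob_space M by fact
  interpret N: prob_space N by fact
  interpret pair_prob_space M N ..
  show ?thesis by (rule P.prob_space_axioms)
qed

lemma glue:
  fixes f :: "'a::metric_space \<Rightarrow> 'b::metric_space" and k :: "'b \<Rightarrow> nat"
  assumes cptA: "compact (UNIV::'a set)" and cptB: "compact (UNIV::'b set)"
    and f: "f \<in> borel_measurable borel"
    and k: "k \<in> measurable borel (count_space UNIV)" and kN: "\<And>y. k y < N"
    and P: "\<mu> \<in> P2" "\<nu> \<in> P2"
    and pi': "\<pi>' \<in> couplings (push f \<mu>) (push f \<nu>)"
  shows "\<exists>\<pi> \<in> couplings \<mu> \<nu>. \<forall>i<N. \<forall>j<N.
           measure \<pi> ({x. k (f x) = i} \<times> {x. k (f x) = j}) = measure \<pi>' ({y. k y = i} \<times> {y. k y = j})"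
proof -
  define A where "A i = {x. k (f x) = i}" for i
  define B where "B i = {y. k y = i}" for i
  define mu where "mu i = measure \<mu> (A i)" for i
  define nu where "nu i = measure \<nu> (A i)" for i
  define p where "p i j = measure \<pi>' (B i \<times> B j)" for i j
  define cc where "cc i j = p i j / (mu i * nu j)" for i j
  interpret m: prob_space \<mu> using P by (simp add: P2_prob)
  interpret n: prob_space \<nu> using P by (simp add: P2_prob)
  interpret pp: pair_prob_space \<mu> \<nu> ..
  have Pf: "push f \<mu> \<in> P2" "push f \<nu> \<in> P2" using P f by (auto intro: push_P2)
  have qprob: "prob_space \<pi>'" by (rule coupling_prob[OF pi' Pf(1)])
  interpret q: prob_space \<pi>' by (rule qprob)
  have fmq: "finite_measure \<pi>'" by (rule prob_fm[OF qprob])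
  have fmm: "finite_measure \<mu>" by (rule prob_fm) (simp add: P2_prob P)
  have fmn: "finite_measure \<nu>" by (rule prob_fm) (simp add: P2_prob P)
  have pprob: "prob_space (\<mu> \<Otimes>\<^sub>M \<nu>)" by (rule prob_pair) (simp_all add: P2_prob P)
  have fmP: "finite_measure (\<mu> \<Otimes>\<^sub>M \<nu>)" by (rule prob_fm[OF pprob])
  have spi': "sets \<pi>' = sets (borel \<Otimes>\<^sub>M borel)"
    using coupling_sets[OF pi'] borel_prod_cpt[OF cptB cptB] by simp
  have spacepi': "space \<pi>' = UNIV" using coupling_space[OF pi'] .
  have kf: "(\<lambda>x. k (f x)) \<in> measurable borel (count_space UNIV)"
    using measurable_comp[OF f k] by (simp add: comp_def)
  have A_sets: "A i \<in> sets borel" for i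
    using level_set_sets[OF kf, of i] by (simp add: A_def)
  have B_sets: "B i \<in> sets borel" for i
    using level_set_sets[OF k, of i] by (simp add: B_def)
  have fst': "fst \<in> measurable \<pi>' borel" "snd \<in> measurable \<pi>' borel"
    using coupling_sets[OF pi'] by (auto intro!: meas_sets_borel borel_measurable_continuous_onI continuous_intros)
  have fmu: "f \<in> measurable \<mu> borel" using meas_sets_borel[OF P2_sets[OF P(1)] f] .
  have fnu: "f \<in> measurable \<nu> borel" using meas_sets_borel[OF P2_sets[OF P(2)] f] .
  have pif: "distr \<pi>' borel fst = push f \<mu>" "distr \<pi>' borel snd = push f \<nu>"
    using pi' by (auto simp: couplings_def)
  have BU: "B i \<times> UNIV \<in> sets \<pi>'" "UNIV \<times> B i \<in> sets \<pi>'" for i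
    using B_sets by (auto simp: spi' intro!: pair_measureI)
  have marg1: "measure \<pi>' (B i \<times> UNIV) = mu i" for i
  proof -
    have "fst -` B i \<inter> space \<pi>' = B i \<times> UNIV" by (auto simp: spacepi')
    then have "measure \<pi>' (B i \<times> UNIV) = measure \<pi>' (fst -` B i \<inter> space \<pi>')" by simp
    also have "\<dots> = measure (distr \<pi>' borel fst) (B i)"
      by (rule measure_distr[symmetric, OF fst'(1) B_sets])
    also have "\<dots> = measure (push f \<mu>) (B i)" using pif by simp
    also have "\<dots> = measure \<mu> (f -` B i \<inter> space \<mu>)" unfolding push_def
      by (rule measure_distr[OF fmu B_sets])
    also have "f -` B i \<inter> space \<mu> = A i" by (auto simp: A_def B_def P2_space[OF P(1)])
    finally show ?thesis by (simp add: mu_def)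
  qed
  have marg2: "measure \<pi>' (UNIV \<times> B j) = nu j" for j
  proof -
    have "snd -` B j \<inter> space \<pi>' = UNIV \<times> B j" by (auto simp: spacepi')
    then have "measure \<pi>' (UNIV \<times> B j) = measure \<pi>' (snd -` B j \<inter> space \<pi>')" by simp
    also have "\<dots> = measure (distr \<pi>' borel snd) (B j)"
      by (rule measure_distr[symmetric, OF fst'(2) B_sets])
    also have "\<dots> = measure (push f \<nu>) (B j)" using pif by simp
    also have "\<dots> = measure \<nu> (f -` B j \<inter> space \<nu>)" unfolding push_def
      by (rule measure_distr[OF fnu B_sets])
    also have "f -` B j \<inter> space \<nu> = A j" by (auto simp: A_def B_def P2_space[OF P(2)])
    finally show ?thesis by (simp add: nu_def)
  qed
  have ks: "(\<lambda>q. k (snd q)) \<in> measurable \<pi>' (count_space UNIV)"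
    using measurable_comp[OF fst'(2) k] by (simp add: comp_def)
  have kf': "(\<lambda>q. k (fst q)) \<in> measurable \<pi>' (count_space UNIV)"
    using measurable_comp[OF fst'(1) k] by (simp add: comp_def)
  have psum1: "(\<Sum>j<N. p i j) = mu i" for i
  proof -
    have "measure \<pi>' (B i \<times> UNIV) = (\<Sum>j<N. measure \<pi>' ((B i \<times> UNIV) \<inter> {q\<in>space \<pi>'. k (snd q) = j}))"
      by (rule measure_split1[OF fmq ks]) (auto simp: kN BU)
    also have "\<dots> = (\<Sum>j<N. p i j)"
      by (intro sum.cong refl) (auto simp: p_def spacepi' B_def intro!: arg_cong[where f="measure \<pi>'"])
    finally show ?thesis using marg1 by simp
  qed
  have psum2: "(\<Sum>i<N. p i j) = nu j" for j
  proof -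
    have "measure \<pi>' (UNIV \<times> B j) = (\<Sum>i<N. measure \<pi>' ((UNIV \<times> B j) \<inter> {q\<in>space \<pi>'. k (fst q) = i}))"
      by (rule measure_split1[OF fmq kf']) (auto simp: kN BU)
    also have "\<dots> = (\<Sum>i<N. p i j)"
      by (intro sum.cong refl) (auto simp: p_def spacepi' B_def intro!: arg_cong[where f="measure \<pi>'"])
    finally show ?thesis using marg2 by simp
  qed
  have p_nonneg: "0 \<le> p i j" for i j by (simp add: p_def)
  have p_le1: "p i j \<le> mu i" for i j
    unfolding marg1[symmetric] p_def by (rule q.finite_measure_mono[OF _ BU(1)]) auto
  have p_le2: "p i j \<le> nu j" for i j
    unfolding marg2[symmetric] p_def by (rule q.finite_measure_mono[OF _ BU(2)]) auto
  have cc_nonneg: "0 \<le> cc i j" for i j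
    by (simp add: cc_def p_nonneg mu_def nu_def)
  have cc_eq: "cc i j * (mu i * nu j) = p i j" for i j
  proof (cases "mu i * nu j = 0")
    case True
    then have "p i j = 0" using p_le1[of i j] p_le2[of i j] p_nonneg[of i j] by auto
    then show ?thesis by (simp add: cc_def)
  next
    case False
    then show ?thesis by (simp add: cc_def)
  qed
  define h1 where "h1 q = k (f (fst q))" for q :: "'a \<times> 'a"
  define h2 where "h2 q = k (f (snd q))" for q :: "'a \<times> 'a"
  define \<rho> where "\<rho> q = cc (h1 q) (h2 q)" for q
  define \<pi> where "\<pi> = density (\<mu> \<Otimes>\<^sub>M \<nu>) (\<lambda>q. ennreal (\<rho> q))"
  have sP: "sets (\<mu> \<Otimes>\<^sub>M \<nu>) = sets (borel :: ('a \<times> 'a) measure)"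
    using borel_prod_cpt[OF cptA cptA] P by (simp add: P2_sets cong: sets_pair_measure_cong)
  have spaceP: "space (\<mu> \<Otimes>\<^sub>M \<nu>) = UNIV" by (simp add: space_pair_measure P2_space P)
  have kfm: "(\<lambda>x. k (f x)) \<in> measurable \<mu> (count_space UNIV)"
    using kf unfolding measurable_cong_sets[OF P2_sets[OF P(1)] refl] .
  have kfn: "(\<lambda>x. k (f x)) \<in> measurable \<nu> (count_space UNIV)"
    using kf unfolding measurable_cong_sets[OF P2_sets[OF P(2)] refl] .
  have h1m: "h1 \<in> measurable (\<mu> \<Otimes>\<^sub>M \<nu>) (count_space UNIV)"
    using measurable_comp[OF measurable_fst kfm] by (simp add: comp_def h1_def[abs_def])
  have h2m: "h2 \<in> measurable (\<mu> \<Otimes>\<^sub>M \<nu>) (count_space UNIV)"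
    using measurable_comp[OF measurable_snd kfn] by (simp add: comp_def h2_def[abs_def])
  have hN: "h1 q < N \<and> h2 q < N" for q by (simp add: h1_def h2_def kN)
  have \<rho>m: "\<rho> \<in> borel_measurable (\<mu> \<Otimes>\<^sub>M \<nu>)"
    unfolding \<rho>_def
    by (rule measurable_compose_countable[where f="\<lambda>i q. cc i (h2 q)", OF _ h1m],
        rule measurable_compose_countable[where f="\<lambda>j q. cc i j" for i, OF _ h2m]) simp
  have \<rho>em: "(\<lambda>q. ennreal (\<rho> q)) \<in> borel_measurable (\<mu> \<Otimes>\<^sub>M \<nu>)" using \<rho>m by simp
  have \<rho>_bound: "\<rho> q \<le> (\<Sum>i<N. \<Sum>j<N. cc i j)" for q
  proof -
    have "cc (h1 q) (h2 q) \<le> (\<Sum>j<N. cc (h1 q) j)"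
      using hN[of q] cc_nonneg by (intro member_le_sum) auto
    also have "\<dots> \<le> (\<Sum>i<N. \<Sum>j<N. cc i j)"
      using hN[of q] cc_nonneg by (intro member_le_sum[where f="\<lambda>i. \<Sum>j<N. cc i j"]) (auto intro: sum_nonneg)
    finally show ?thesis by (simp add: \<rho>_def)
  qed
  have \<rho>_nonneg: "0 \<le> \<rho> q" for q by (simp add: \<rho>_def cc_nonneg)
  have formula: "emeasure \<pi> (E \<times> F) = ennreal (\<Sum>i<N. \<Sum>j<N. cc i j * (measure \<mu> (E \<inter> A i) * measure \<nu> (F \<inter> A j)))"
    if E: "E \<in> sets borel" and F: "F \<in> sets borel" for E F
  proof -
    have EF: "E \<times> F \<in> sets (\<mu> \<Otimes>\<^sub>M \<nu>)" using E F by (simp add: sP[symmetric] P2_sets P pair_measureI)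
    have int: "integrable (\<mu> \<Otimes>\<^sub>M \<nu>) (\<lambda>q. indicator (E \<times> F) q * \<rho> q)"
    proof (rule finite_measure.integrable_const_bound[OF fmP, where B="\<Sum>i<N. \<Sum>j<N. cc i j"])
      show "AE q in \<mu> \<Otimes>\<^sub>M \<nu>. norm (indicator (E \<times> F) q * \<rho> q) \<le> (\<Sum>i<N. \<Sum>j<N. cc i j)"
        using \<rho>_bound \<rho>_nonneg by (auto simp: indicator_def intro!: sum_nonneg cc_nonneg)
      show "(\<lambda>q. indicator (E \<times> F) q * \<rho> q) \<in> borel_measurable (\<mu> \<Otimes>\<^sub>M \<nu>)"
        using EF \<rho>m by measurable
    qed
    have "emeasure \<pi> (E \<times> F) = (\<integral>\<^sup>+q. ennreal (\<rho> q) * indicator (E \<times> F) q \<partial>(\<mu> \<Otimes>\<^sub>M \<nu>))"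
      unfolding \<pi>_def by (rule emeasure_density[OF \<rho>em EF])
    also have "\<dots> = (\<integral>\<^sup>+q. ennreal (indicator (E \<times> F) q * \<rho> q) \<partial>(\<mu> \<Otimes>\<^sub>M \<nu>))"
      by (intro nn_integral_cong) (auto split: split_indicator)
    also have "\<dots> = ennreal (\<integral>q. indicator (E \<times> F) q * \<rho> q \<partial>(\<mu> \<Otimes>\<^sub>M \<nu>))"
      by (rule nn_integral_eq_integral[OF int]) (auto simp: \<rho>_nonneg)
    also have "(\<integral>q. indicator (E \<times> F) q * \<rho> q \<partial>(\<mu> \<Otimes>\<^sub>M \<nu>)) =
        (\<Sum>i<N. \<Sum>j<N. cc i j * measure (\<mu> \<Otimes>\<^sub>M \<nu>) ((E \<times> F) \<inter> {q\<in>space (\<mu> \<Otimes>\<^sub>M \<nu>). h1 q = i \<and> h2 q = j}))"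
      unfolding \<rho>_def by (rule integral_index2[OF fmP h1m h2m hN EF])
    also have "\<dots> = (\<Sum>i<N. \<Sum>j<N. cc i j * (measure \<mu> (E \<inter> A i) * measure \<nu> (F \<inter> A j)))"
    proof (intro sum.cong refl)
      fix i j
      have "(E \<times> F) \<inter> {q\<in>space (\<mu> \<Otimes>\<^sub>M \<nu>). h1 q = i \<and> h2 q = j} = (E \<inter> A i) \<times> (F \<inter> A j)"
        by (auto simp: spaceP h1_def h2_def A_def)
      moreover have "E \<inter> A i \<in> sets \<mu>" "F \<inter> A j \<in> sets \<nu>"
        using E F A_sets by (auto simp: P2_sets P)
      ultimately show "cc i j * measure (\<mu> \<Otimes>\<^sub>M \<nu>) ((E \<times> F) \<inter> {q\<in>space (\<mu> \<Otimes>\<^sub>M \<nu>). h1 q = i \<and> h2 q = j}) =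
          cc i j * (measure \<mu> (E \<inter> A i) * measure \<nu> (F \<inter> A j))"
        by (simp add: pair_measure_times P2_prob P)
    qed
    finally show ?thesis .
  qed
  have sets_pi: "sets \<pi> = sets borel" by (simp add: \<pi>_def sP)
  have space_pi: "space \<pi> = UNIV" using sets_eq_imp_space_eq[OF sets_pi] by simp
  have fst_pi: "fst \<in> measurable \<pi> borel" "snd \<in> measurable \<pi> borel"
    using sets_pi by (auto intro!: meas_sets_borel borel_measurable_continuous_onI continuous_intros)
  have mu_nonneg: "0 \<le> mu i" for i by (simp add: mu_def)
  have nu_nonneg: "0 \<le> nu i" for i by (simp add: nu_def)
  have R1: "(\<Sum>i<N. \<Sum>j<N. cc i j * (measure \<mu> (E \<inter> A i) * measure \<nu> (UNIV \<inter> A j))) = measure \<mu> E"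
    if E: "E \<in> sets borel" for E
  proof -
    have "(\<Sum>i<N. \<Sum>j<N. cc i j * (measure \<mu> (E \<inter> A i) * measure \<nu> (UNIV \<inter> A j))) = (\<Sum>i<N. measure \<mu> (E \<inter> A i))"
    proof (rule sum.cong[OF refl])
      fix i
      show "(\<Sum>j<N. cc i j * (measure \<mu> (E \<inter> A i) * measure \<nu> (UNIV \<inter> A j))) = measure \<mu> (E \<inter> A i)"
      proof (cases "mu i = 0")
        case True
        have "measure \<mu> (E \<inter> A i) \<le> mu i" unfolding mu_def
          using A_sets by (intro m.finite_measure_mono) (auto simp: P2_sets P)
        then have "measure \<mu> (E \<inter> A i) = 0" using True measure_nonneg[of \<mu> "E \<inter> A i"] by linarith
        then show ?thesis by simp
      next
        case mu0: False
        have "(\<Sum>j<N. cc i j * (measure \<mu> (E \<inter> A i) * measure \<nu> (UNIV \<inter> A j))) = measure \<mu> (E \<inter> A i) * (\<Sum>j<N. cc i j * nu j)"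
          by (simp add: sum_distrib_left nu_def mult.commute mult.left_commute)
        also have "(\<Sum>j<N. cc i j * nu j) = (\<Sum>j<N. p i j / mu i)"
        proof (rule sum.cong[OF refl])
          fix j show "cc i j * nu j = p i j / mu i"
          proof (cases "nu j = 0")
            case True
            then have "p i j = 0" using p_le2[of i j] p_nonneg[of i j] by auto
            then show ?thesis using True by (simp add: cc_def)
          next
            case False
            then show ?thesis using mu0 by (simp add: cc_def field_simps)
          qed
        qed
        also have "\<dots> = 1" using psum1[of i] mu0 by (simp add: sum_divide_distrib[symmetric])
        finally show ?thesis by simp
      qed
    qed
    also have "\<dots> = measure \<mu> E"
    proof -
      have "measure \<mu> E = (\<Sum>i<N. measure \<mu> (E \<inter> {x\<in>space \<mu>. k (f x) = i}))"
        by (rule measure_split1[OF fmm kfm]) (auto simp: kN E P2_sets P)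
      also have "\<dots> = (\<Sum>i<N. measure \<mu> (E \<inter> A i))"
        by (simp add: A_def P2_space P)
      finally show ?thesis by simp
    qed
    finally show ?thesis .
  qed
  have R2: "(\<Sum>i<N. \<Sum>j<N. cc i j * (measure \<mu> (UNIV \<inter> A i) * measure \<nu> (F \<inter> A j))) = measure \<nu> F"
    if F: "F \<in> sets borel" for F
  proof -
    have "(\<Sum>i<N. \<Sum>j<N. cc i j * (measure \<mu> (UNIV \<inter> A i) * measure \<nu> (F \<inter> A j))) =
          (\<Sum>j<N. \<Sum>i<N. cc i j * (measure \<mu> (UNIV \<inter> A i) * measure \<nu> (F \<inter> A j)))"
      by (rule sum.swap)
    also have "\<dots> = (\<Sum>j<N. measure \<nu> (F \<inter> A j))"
    proof (rule sum.cong[OF refl])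
      fix j
      show "(\<Sum>i<N. cc i j * (measure \<mu> (UNIV \<inter> A i) * measure \<nu> (F \<inter> A j))) = measure \<nu> (F \<inter> A j)"
      proof (cases "nu j = 0")
        case True
        have "measure \<nu> (F \<inter> A j) \<le> nu j" unfolding nu_def
          using A_sets by (intro n.finite_measure_mono) (auto simp: P2_sets P)
        then have "measure \<nu> (F \<inter> A j) = 0" using True measure_nonneg[of \<nu> "F \<inter> A j"] by linarith
        then show ?thesis by simp
      next
        case nu0: False
        have "(\<Sum>i<N. cc i j * (measure \<mu> (UNIV \<inter> A i) * measure \<nu> (F \<inter> A j))) = measure \<nu> (F \<inter> A j) * (\<Sum>i<N. cc i j * mu i)"
          by (simp add: sum_distrib_left mu_def mult.commute mult.left_commute)
        also have "(\<Sum>i<N. cc i j * mu i) = (\<Sum>i<N. p i j / nu j)"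
        proof (rule sum.cong[OF refl])
          fix i show "cc i j * mu i = p i j / nu j"
          proof (cases "mu i = 0")
            case True
            then have "p i j = 0" using p_le1[of i j] p_nonneg[of i j] by auto
            then show ?thesis using True by (simp add: cc_def)
          next
            case False
            then show ?thesis using nu0 by (simp add: cc_def field_simps)
          qed
        qed
        also have "\<dots> = 1" using psum2[of j] nu0 by (simp add: sum_divide_distrib[symmetric])
        finally show ?thesis by simp
      qed
    qed
    also have "\<dots> = measure \<nu> F"
    proof -
      have "measure \<nu> F = (\<Sum>j<N. measure \<nu> (F \<inter> {x\<in>space \<nu>. k (f x) = j}))"
        by (rule measure_split1[OF fmn kfn]) (auto simp: kN F P2_sets P)
      also have "\<dots> = (\<Sum>j<N. measure \<nu> (F \<inter> A j))"
        by (simp add: A_def P2_space P)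
      finally show ?thesis by simp
    qed
    finally show ?thesis .
  qed
  have Ub: "UNIV \<in> sets borel" by simp
  have m1: "distr \<pi> borel fst = \<mu>"
  proof (rule measure_eqI)
    show "sets (distr \<pi> borel fst) = sets \<mu>" by (simp add: P2_sets P)
    fix E assume "E \<in> sets (distr \<pi> borel fst)"
    then have E: "E \<in> sets borel" by simp
    have "emeasure (distr \<pi> borel fst) E = emeasure \<pi> (fst -` E \<inter> space \<pi>)"
      by (rule emeasure_distr[OF fst_pi(1) E])
    also have "fst -` E \<inter> space \<pi> = E \<times> UNIV" by (auto simp: space_pi)
    also have "emeasure \<pi> (E \<times> UNIV) = ennreal (measure \<mu> E)"
      using formula[OF E Ub] R1[OF E] by simp
    also have "\<dots> = emeasure \<mu> E" by (simp add: m.emeasure_eq_measure)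
    finally show "emeasure (distr \<pi> borel fst) E = emeasure \<mu> E" .
  qed
  have m2: "distr \<pi> borel snd = \<nu>"
  proof (rule measure_eqI)
    show "sets (distr \<pi> borel snd) = sets \<nu>" by (simp add: P2_sets P)
    fix F assume "F \<in> sets (distr \<pi> borel snd)"
    then have F: "F \<in> sets borel" by simp
    have "emeasure (distr \<pi> borel snd) F = emeasure \<pi> (snd -` F \<inter> space \<pi>)"
      by (rule emeasure_distr[OF fst_pi(2) F])
    also have "snd -` F \<inter> space \<pi> = UNIV \<times> F" by (auto simp: space_pi)
    also have "emeasure \<pi> (UNIV \<times> F) = ennreal (measure \<nu> F)"
      using formula[OF Ub F] R2[OF F] by simp
    also have "\<dots> = emeasure \<nu> F" by (simp add: n.emeasure_eq_measure)
    finally show "emeasure (distr \<pi> borel snd) F = emeasure \<nu> F" .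
  qed
  have cpl: "\<pi> \<in> couplings \<mu> \<nu>" using sets_pi m1 m2 by (simp add: couplings_def)
  have ident: "measure \<pi> (A i0 \<times> A j0) = p i0 j0" if i0: "i0 < N" and j0: "j0 < N" for i0 j0
  proof -
    have "(\<Sum>i<N. \<Sum>j<N. cc i j * (measure \<mu> (A i0 \<inter> A i) * measure \<nu> (A j0 \<inter> A j))) =
          (\<Sum>i<N. if i = i0 then (\<Sum>j<N. if j = j0 then cc i j * (mu i * nu j) else 0) else 0)"
    proof (intro sum.cong refl)
      fix i assume "i \<in> {..<N}"
      have "(\<Sum>j<N. cc i j * (measure \<mu> (A i0 \<inter> A i) * measure \<nu> (A j0 \<inter> A j))) =
            (\<Sum>j<N. if i = i0 then (if j = j0 then cc i j * (mu i * nu j) else 0) else 0)"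
      proof (intro sum.cong refl)
        fix j
        have a: "A i0 \<inter> A i = (if i = i0 then A i else {})" "A j0 \<inter> A j = (if j = j0 then A j else {})"
          by (auto simp: A_def)
        show "cc i j * (measure \<mu> (A i0 \<inter> A i) * measure \<nu> (A j0 \<inter> A j)) =
            (if i = i0 then (if j = j0 then cc i j * (mu i * nu j) else 0) else 0)"
          unfolding a by (simp add: mu_def nu_def)
      qed
      then show "(\<Sum>j<N. cc i j * (measure \<mu> (A i0 \<inter> A i) * measure \<nu> (A j0 \<inter> A j))) =
          (if i = i0 then (\<Sum>j<N. if j = j0 then cc i j * (mu i * nu j) else 0) else 0)"
        by simp
    qed
    also have "\<dots> = p i0 j0" using i0 j0 cc_eq by simp
    finally have "emeasure \<pi> (A i0 \<times> A j0) = ennreal (p i0 j0)"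
      using formula[OF A_sets A_sets] by simp
    then show ?thesis by (simp add: measure_def p_nonneg)
  qed
  show ?thesis
    using cpl ident by (auto simp: A_def B_def p_def)
qed

lemma int_bounded:
  assumes "prob_space M" "g \<in> borel_measurable M" "\<And>x. x \<in> space M \<Longrightarrow> \<bar>g x\<bar> \<le> B"
  shows "integrable M (g :: _ \<Rightarrow> real)"
  by (rule finite_measure.integrable_const_bound[OF prob_fm[OF assms(1)], where B=B]) (use assms in auto)

lemma integral_le_const_prob:
  fixes g :: "'a \<Rightarrow> real"
  assumes "prob_space M" "g \<in> borel_measurable M" "\<And>x. x \<in> space M \<Longrightarrow> \<bar>g x\<bar> \<le> B"
  shows "(\<integral>x. g x \<partial>M) \<le> B"
proof -
  have "(\<integral>x. g x \<partial>M) \<le> (\<integral>x. B \<partial>M)"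
    using assms finite_measure.integrable_const[OF prob_fm[OF assms(1)]]
    by (intro integral_mono int_bounded[OF assms]) (auto simp: abs_le_iff)
  also have "\<dots> = B" using prob_space.prob_space[OF assms(1)] by simp
  finally show ?thesis .
qed

lemma dist_bound:
  assumes "compact (UNIV::'a::metric_space set)"
  obtains D :: real where "D \<ge> 0" "\<And>x y::'a. dist x y \<le> D"
proof -
  from bounded_two_points[THEN iffD1, OF compact_imp_bounded[OF assms]]
  obtain e where e: "\<forall>x\<in>(UNIV::'a set). \<forall>y\<in>UNIV. dist x y \<le> e" by (elim exE)
  show ?thesis
  proof (rule that[of "max e 0"])
    fix x y :: 'a
    have "dist x y \<le> e" using e by blast
    then show "dist x y \<le> max e 0" by linarith
  qed simp
qed

lemma sq_le:
  fixes s t e M :: real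
  assumes "0 \<le> s" "0 \<le> t" "s \<le> M" "t \<le> M" "s \<le> t + e" "0 \<le> e"
  shows "s\<^sup>2 \<le> t\<^sup>2 + 2*M*e"
proof (cases "s \<le> t")
  case True
  then have "s\<^sup>2 \<le> t\<^sup>2" using assms by (intro power_mono) auto
  moreover have "0 \<le> 2*M*e" using assms by auto
  ultimately show ?thesis by linarith
next
  case False
  have "(s - t) * (s + t) \<le> e * (2*M)" using assms False by (intro mult_mono) auto
  moreover have "s\<^sup>2 - t\<^sup>2 = (s - t) * (s + t)" by (simp add: power2_eq_square algebra_simps)
  ultimately show ?thesis by (simp add: algebra_simps)
qed

lemma isom_cont:
  assumes "g \<in> Isom" shows "continuous_on UNIV g"
proof -
  have d: "\<And>x y. dist (g x) (g y) = dist x y" using assms by (simp add: Isom_def)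
  show ?thesis unfolding continuous_on_iff
  proof (intro ballI allI impI)
    fix x and e :: real assume "e > 0"
    then show "\<exists>d>0. \<forall>x'\<in>UNIV. dist x' x < d \<longrightarrow> dist (g x') (g x) < e"
      by (intro exI[of _ e]) (simp add: d)
  qed
qed

lemma pair_meas:
  fixes a b :: "'a::metric_space \<Rightarrow> 'b::metric_space"
  assumes cptB: "compact (UNIV :: 'b set)"
    and P: "sets M = sets borel" and a: "a \<in> borel_measurable borel" and b: "b \<in> borel_measurable borel"
  shows "(\<lambda>x. (a x, b x)) \<in> measurable M borel"
proof -
  have am: "a \<in> measurable M borel" by (rule meas_sets_borel[OF P a])
  have bm: "b \<in> measurable M borel" by (rule meas_sets_borel[OF P b])
  have "(\<lambda>x. (a x, b x)) \<in> measurable M (borel \<Otimes>\<^sub>M borel)"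
    by (rule measurable_Pair[OF am bm])
  then show "(\<lambda>x. (a x, b x)) \<in> measurable M borel"
    unfolding measurable_cong_sets[OF refl borel_prod_cpt[OF cptB cptB]] .
qed

lemma pair_dist_meas:
  fixes a b :: "'a::metric_space \<Rightarrow> 'b::metric_space"
  assumes cptB: "compact (UNIV :: 'b set)"
    and P: "sets M = sets borel" and a: "a \<in> borel_measurable borel" and b: "b \<in> borel_measurable borel"
  shows "(\<lambda>x. (dist (a x) (b x))\<^sup>2) \<in> borel_measurable M"
  using measurable_comp[OF pair_meas[OF cptB P a b] cost_meas] by (simp add: comp_def)

lemma pair_coupling:
  fixes a b :: "'a::metric_space \<Rightarrow> 'b::metric_space"
  assumes cptB: "compact (UNIV :: 'b set)"
    and P: "\<mu> \<in> P2" and a: "a \<in> borel_measurable borel" and b: "b \<in> borel_measurable borel"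
  shows "distr \<mu> borel (\<lambda>x. (a x, b x)) \<in> couplings (distr \<mu> borel a) (distr \<mu> borel b)"
    and "cst (distr \<mu> borel (\<lambda>x. (a x, b x))) = (\<integral>x. (dist (a x) (b x))\<^sup>2 \<partial>\<mu>)"
proof -
  have Hm: "(\<lambda>x. (a x, b x)) \<in> measurable \<mu> borel"
    by (rule pair_meas[OF cptB P2_sets[OF P] a b])
  have fm: "fst \<in> measurable (borel :: ('b \<times> 'b) measure) borel" "snd \<in> measurable (borel :: ('b \<times> 'b) measure) borel"
    by (auto intro!: borel_measurable_continuous_onI continuous_intros)
  have "distr (distr \<mu> borel (\<lambda>x. (a x, b x))) borel fst = distr \<mu> borel (fst \<circ> (\<lambda>x. (a x, b x)))"
    by (rule distr_distr[OF fm(1) Hm])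
  also have "fst \<circ> (\<lambda>x. (a x, b x)) = a" by (simp add: comp_def)
  finally have 1: "distr (distr \<mu> borel (\<lambda>x. (a x, b x))) borel fst = distr \<mu> borel a" .
  have "distr (distr \<mu> borel (\<lambda>x. (a x, b x))) borel snd = distr \<mu> borel (snd \<circ> (\<lambda>x. (a x, b x)))"
    by (rule distr_distr[OF fm(2) Hm])
  also have "snd \<circ> (\<lambda>x. (a x, b x)) = b" by (simp add: comp_def)
  finally have 2: "distr (distr \<mu> borel (\<lambda>x. (a x, b x))) borel snd = distr \<mu> borel b" .
  show "distr \<mu> borel (\<lambda>x. (a x, b x)) \<in> couplings (distr \<mu> borel a) (distr \<mu> borel b)"
    using 1 2 by (simp add: couplings_def)
  show "cst (distr \<mu> borel (\<lambda>x. (a x, b x))) = (\<integral>x. (dist (a x) (b x))\<^sup>2 \<partial>\<mu>)"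
    unfolding cst_def by (subst integral_distr[OF Hm cost_meas]) simp
qed

lemma W2_pair_le:
  fixes a b :: "'a::metric_space \<Rightarrow> 'b::metric_space"
  assumes cptB: "compact (UNIV :: 'b set)"
    and P: "\<mu> \<in> P2" and a: "a \<in> borel_measurable borel" and b: "b \<in> borel_measurable borel"
    and d: "\<And>x. dist (a x) (b x) \<le> e"
  shows "W2 (distr \<mu> borel a) (distr \<mu> borel b) \<le> e"
proof -
  have e0: "0 \<le> e" using d[of undefined] zero_le_dist order_trans by blast
  have am: "a \<in> measurable \<mu> borel" by (rule meas_sets_borel[OF P2_sets[OF P] a])
  have bm: "b \<in> measurable \<mu> borel" by (rule meas_sets_borel[OF P2_sets[OF P] b])
  have "W2 (distr \<mu> borel a) (distr \<mu> borel b) \<le> sqrt (cst (distr \<mu> borel (\<lambda>x. (a x, b x))))"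
    by (rule W2_le_cst[OF pair_coupling(1)[OF cptB P a b]])
  also have "cst (distr \<mu> borel (\<lambda>x. (a x, b x))) = (\<integral>x. (dist (a x) (b x))\<^sup>2 \<partial>\<mu>)"
    by (rule pair_coupling(2)[OF cptB P a b])
  also have "\<dots> \<le> e\<^sup>2"
  proof (rule integral_le_const_prob[OF P2_prob[OF P]])
    show "(\<lambda>x. (dist (a x) (b x))\<^sup>2) \<in> borel_measurable \<mu>"
      by (rule pair_dist_meas[OF cptB P2_sets[OF P] a b])
    fix x show "\<bar>(dist (a x) (b x))\<^sup>2\<bar> \<le> e\<^sup>2" using d[of x] by (simp add: power_mono)
  qed
  finally show ?thesis using e0 by (simp add: real_sqrt_le_mono) 
qed

lemma integral_le_prob:
  fixes g :: "'a \<Rightarrow> real"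
  assumes "prob_space M" "g \<in> borel_measurable M" "\<And>x. x \<in> space M \<Longrightarrow> \<bar>g x\<bar> \<le> B"
    and "\<And>x. x \<in> space M \<Longrightarrow> g x \<le> C"
  shows "(\<integral>x. g x \<partial>M) \<le> C"
proof -
  have "(\<integral>x. g x \<partial>M) \<le> (\<integral>x. C \<partial>M)"
    using assms finite_measure.integrable_const[OF prob_fm[OF assms(1)]]
    by (intro integral_mono int_bounded[OF assms(1-3)]) auto
  also have "\<dots> = C" using prob_space.prob_space[OF assms(1)] by simp
  finally show ?thesis .
qed

lemma coupling_P2:
  assumes "\<pi> \<in> couplings \<mu> \<nu>" "\<mu> \<in> P2" shows "\<pi> \<in> P2"
  using coupling_prob[OF assms] coupling_sets[OF assms(1)] by (simp add: P2_def)

lemma upper: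
  fixes f :: "'a::metric_space \<Rightarrow> 'b::metric_space"
  assumes cptA: "compact (UNIV :: 'a set)" and cptB: "compact (UNIV :: 'b set)"
    and f: "f \<in> borel_measurable borel"
    and approx: "\<And>x x'. \<bar>dist (f x) (f x') - dist x x'\<bar> \<le> \<epsilon>" and e0: "0 \<le> \<epsilon>"
    and MX: "\<And>x x'::'a. dist x x' \<le> M" and MY: "\<And>y y'::'b. dist y y' \<le> M"
    and P: "\<mu> \<in> P2" "\<nu> \<in> P2" and pi: "\<pi> \<in> couplings \<mu> \<nu>"
  shows "\<exists>\<pi>'\<in>couplings (push f \<mu>) (push f \<nu>). cst \<pi>' \<le> cst \<pi> + 2*M*\<epsilon>"
proof -
  have piP: "\<pi> \<in> P2" by (rule coupling_P2[OF pi P(1)])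
  have sp: "sets \<pi> = sets borel" by (rule coupling_sets[OF pi])
  have fstm: "fst \<in> measurable (borel :: ('a \<times> 'a) measure) borel" "snd \<in> measurable (borel :: ('a \<times> 'a) measure) borel"
    by (auto intro!: borel_measurable_continuous_onI continuous_intros)
  have fa: "(\<lambda>p. f (fst p)) \<in> borel_measurable (borel :: ('a \<times> 'a) measure)"
    using measurable_comp[OF fstm(1) f] by (simp add: comp_def)
  have fb: "(\<lambda>p. f (snd p)) \<in> borel_measurable (borel :: ('a \<times> 'a) measure)"
    using measurable_comp[OF fstm(2) f] by (simp add: comp_def)
  let ?pi' = "distr \<pi> borel (\<lambda>p. (f (fst p), f (snd p)))"
  have c: "?pi' \<in> couplings (distr \<pi> borel (\<lambda>p. f (fst p))) (distr \<pi> borel (\<lambda>p. f (snd p)))"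
    by (rule pair_coupling(1)[OF cptB piP fa fb])
  have fstp: "fst \<in> measurable \<pi> borel" "snd \<in> measurable \<pi> borel"
    using fstm by (auto intro!: meas_sets_borel[OF sp])
  have "distr \<pi> borel (\<lambda>p. f (fst p)) = distr (distr \<pi> borel fst) borel f"
    using distr_distr[OF f fstp(1)] by (simp add: comp_def)
  also have "\<dots> = push f \<mu>" using pi by (simp add: couplings_def push_def)
  finally have m1: "distr \<pi> borel (\<lambda>p. f (fst p)) = push f \<mu>" .
  have "distr \<pi> borel (\<lambda>p. f (snd p)) = distr (distr \<pi> borel snd) borel f"
    using distr_distr[OF f fstp(2)] by (simp add: comp_def)
  also have "\<dots> = push f \<nu>" using pi by (simp add: couplings_def push_def)
  finally have m2: "distr \<pi> borel (\<lambda>p. f (snd p)) = push f \<nu>" .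
  have cpl: "?pi' \<in> couplings (push f \<mu>) (push f \<nu>)" using c m1 m2 by simp
  have cst': "cst ?pi' = (\<integral>p. (dist (f (fst p)) (f (snd p)))\<^sup>2 \<partial>\<pi>)"
    by (rule pair_coupling(2)[OF cptB piP fa fb])
  have M0: "0 \<le> M" using MX[of undefined undefined] by simp
  have m_f: "(\<lambda>p. (dist (f (fst p)) (f (snd p)))\<^sup>2) \<in> borel_measurable \<pi>"
    by (rule pair_dist_meas[OF cptB sp fa fb])
  have m_d: "(\<lambda>p. (dist (fst p) (snd p))\<^sup>2) \<in> borel_measurable \<pi>"
    by (rule meas_sets_borel[OF sp cost_meas])
  have prob: "prob_space \<pi>" by (rule P2_prob[OF piP])
  have i_f: "integrable \<pi> (\<lambda>p. (dist (f (fst p)) (f (snd p)))\<^sup>2)"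
    by (rule int_bounded[OF prob m_f, where B="M\<^sup>2"]) (simp add: MY power_mono)
  have i_d: "integrable \<pi> (\<lambda>p. (dist (fst p) (snd p))\<^sup>2)"
    by (rule int_bounded[OF prob m_d, where B="M\<^sup>2"]) (simp add: MX power_mono)
  have "cst ?pi' - cst \<pi> = (\<integral>p. (dist (f (fst p)) (f (snd p)))\<^sup>2 - (dist (fst p) (snd p))\<^sup>2 \<partial>\<pi>)"
    unfolding cst' by (simp only: cst_def Bochner_Integration.integral_diff[OF i_f i_d])
  also have "\<dots> \<le> 2*M*\<epsilon>"
  proof (rule integral_le_prob[OF prob, where B="2*M\<^sup>2"])
    show "(\<lambda>p. (dist (f (fst p)) (f (snd p)))\<^sup>2 - (dist (fst p) (snd p))\<^sup>2) \<in> borel_measurable \<pi>"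
      using m_f m_d by measurable
    fix p :: "'a \<times> 'a"
    have a: "(dist (f (fst p)) (f (snd p)))\<^sup>2 \<le> M\<^sup>2" "(dist (fst p) (snd p))\<^sup>2 \<le> M\<^sup>2"
      by (simp_all add: MX MY power_mono)
    moreover have "0 \<le> (dist (f (fst p)) (f (snd p)))\<^sup>2" "0 \<le> (dist (fst p) (snd p))\<^sup>2" by simp_all
    ultimately show "\<bar>(dist (f (fst p)) (f (snd p)))\<^sup>2 - (dist (fst p) (snd p))\<^sup>2\<bar> \<le> 2*M\<^sup>2"
      unfolding abs_le_iff by linarith
    have "dist (f (fst p)) (f (snd p)) \<le> dist (fst p) (snd p) + \<epsilon>" using approx[of "fst p" "snd p"] by (simp add: abs_le_iff)
    then have "(dist (f (fst p)) (f (snd p)))\<^sup>2 \<le> (dist (fst p) (snd p))\<^sup>2 + 2*M*\<epsilon>"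
      by (intro sq_le) (auto simp: MX MY e0)
    then show "(dist (f (fst p)) (f (snd p)))\<^sup>2 - (dist (fst p) (snd p))\<^sup>2 \<le> 2*M*\<epsilon>" by simp
  qed
  finally show ?thesis using cpl by force
qed

lemma index_meas:
  fixes h1 h2 :: "'x \<Rightarrow> nat" and G :: "nat \<Rightarrow> nat \<Rightarrow> real"
  assumes "h1 \<in> measurable M (count_space UNIV)" "h2 \<in> measurable M (count_space UNIV)"
  shows "(\<lambda>q. G (h1 q) (h2 q)) \<in> borel_measurable M"
  by (rule measurable_compose_countable[where f="\<lambda>i q. G i (h2 q)", OF _ assms(1)],
      rule measurable_compose_countable[where f="\<lambda>j q. G i j" for i, OF _ assms(2)]) simp

lemma lower:
  fixes f :: "'a::metric_space \<Rightarrow> 'b::metric_space"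
  assumes cptA: "compact (UNIV :: 'a set)" and cptB: "compact (UNIV :: 'b set)"
    and f: "f \<in> borel_measurable borel"
    and approx: "\<And>x x'. \<bar>dist (f x) (f x') - dist x x'\<bar> \<le> \<epsilon>" and e0: "0 < \<epsilon>"
    and MX: "\<And>x x'::'a. dist x x' \<le> M" and MY: "\<And>y y'::'b. dist y y' \<le> M"
    and P: "\<mu> \<in> P2" "\<nu> \<in> P2" and pi': "\<pi>' \<in> couplings (push f \<mu>) (push f \<nu>)"
  shows "\<exists>\<pi>\<in>couplings \<mu> \<nu>. cst \<pi> \<le> cst \<pi>' + 10*M*\<epsilon>"
proof -
  obtain N :: nat and c :: "nat \<Rightarrow> 'b" and k :: "'b \<Rightarrow> nat" where kN: "\<And>y. k y < N" and kc: "\<And>y. dist y (c (k y)) < \<epsilon>"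
    and k: "k \<in> measurable borel (count_space UNIV)"
    by (rule net_index[OF cptB e0]) blast
  obtain \<pi> where pi: "\<pi> \<in> couplings \<mu> \<nu>" and identA: "\<forall>i<N. \<forall>j<N.
      measure \<pi> ({x. k (f x) = i} \<times> {x. k (f x) = j}) = measure \<pi>' ({y. k y = i} \<times> {y. k y = j})"
    using glue[OF cptA cptB f k kN P pi'] by (elim bexE)
  note ident = identA[rule_format]
  define G where "G i j = (dist (c i) (c j))\<^sup>2" for i j
  have Pf: "push f \<mu> \<in> P2" using P f by (auto intro: push_P2)
  have piP: "\<pi> \<in> P2" by (rule coupling_P2[OF pi P(1)])
  have pi'P: "\<pi>' \<in> P2" by (rule coupling_P2[OF pi' Pf])
  have sp: "sets \<pi> = sets borel" by (rule coupling_sets[OF pi])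
  have sp': "sets \<pi>' = sets borel" by (rule coupling_sets[OF pi'])
  have spc: "space \<pi> = UNIV" by (rule coupling_space[OF pi])
  have spc': "space \<pi>' = UNIV" by (rule coupling_space[OF pi'])
  have prob: "prob_space \<pi>" by (rule P2_prob[OF piP])
  have prob': "prob_space \<pi>'" by (rule P2_prob[OF pi'P])
  have M0: "0 \<le> M" using MX[of undefined undefined] by simp
  have fstm: "fst \<in> measurable (borel :: ('a \<times> 'a) measure) borel" "snd \<in> measurable (borel :: ('a \<times> 'a) measure) borel"
    by (auto intro!: borel_measurable_continuous_onI continuous_intros)
  have fstm': "fst \<in> measurable (borel :: ('b \<times> 'b) measure) borel" "snd \<in> measurable (borel :: ('b \<times> 'b) measure) borel"
    by (auto intro!: borel_measurable_continuous_onI continuous_intros)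
  have kf: "(\<lambda>x. k (f x)) \<in> measurable borel (count_space UNIV)"
    using measurable_comp[OF f k] by (simp add: comp_def)
  have h1: "(\<lambda>q. k (f (fst q))) \<in> measurable \<pi> (count_space UNIV)"
    using measurable_comp[OF fstm(1) kf] unfolding measurable_cong_sets[OF sp refl] by (simp add: comp_def)
  have h2: "(\<lambda>q. k (f (snd q))) \<in> measurable \<pi> (count_space UNIV)"
    using measurable_comp[OF fstm(2) kf] unfolding measurable_cong_sets[OF sp refl] by (simp add: comp_def)
  have g1: "(\<lambda>q. k (fst q)) \<in> measurable \<pi>' (count_space UNIV)"
    using measurable_comp[OF fstm'(1) k] unfolding measurable_cong_sets[OF sp' refl] by (simp add: comp_def)
  have g2: "(\<lambda>q. k (snd q)) \<in> measurable \<pi>' (count_space UNIV)"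
    using measurable_comp[OF fstm'(2) k] unfolding measurable_cong_sets[OF sp' refl] by (simp add: comp_def)
  have Gb: "\<bar>G i j\<bar> \<le> M\<^sup>2" for i j by (simp add: G_def MY power_mono)
  have m_d: "(\<lambda>p. (dist (fst p) (snd p))\<^sup>2) \<in> borel_measurable \<pi>"
    by (rule meas_sets_borel[OF sp cost_meas])
  have m_d': "(\<lambda>p. (dist (fst p) (snd p))\<^sup>2) \<in> borel_measurable \<pi>'"
    by (rule meas_sets_borel[OF sp' cost_meas])
  have m_G: "(\<lambda>q. G (k (f (fst q))) (k (f (snd q)))) \<in> borel_measurable \<pi>"
    by (rule index_meas[OF h1 h2])
  have m_G': "(\<lambda>q. G (k (fst q)) (k (snd q))) \<in> borel_measurable \<pi>'"
    by (rule index_meas[OF g1 g2])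
  have i_d: "integrable \<pi> (\<lambda>p. (dist (fst p) (snd p))\<^sup>2)"
    by (rule int_bounded[OF prob m_d, where B="M\<^sup>2"]) (simp add: MX power_mono)
  have i_d': "integrable \<pi>' (\<lambda>p. (dist (fst p) (snd p))\<^sup>2)"
    by (rule int_bounded[OF prob' m_d', where B="M\<^sup>2"]) (simp add: MY power_mono)
  have i_G: "integrable \<pi> (\<lambda>q. G (k (f (fst q))) (k (f (snd q))))"
    by (rule int_bounded[OF prob m_G Gb])
  have i_G': "integrable \<pi>' (\<lambda>q. G (k (fst q)) (k (snd q)))"
    by (rule int_bounded[OF prob' m_G' Gb])
  have a: "cst \<pi> - (\<integral>q. G (k (f (fst q))) (k (f (snd q))) \<partial>\<pi>) \<le> 6*M*\<epsilon>"
  proof -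
    have "cst \<pi> - (\<integral>q. G (k (f (fst q))) (k (f (snd q))) \<partial>\<pi>) =
        (\<integral>q. (dist (fst q) (snd q))\<^sup>2 - G (k (f (fst q))) (k (f (snd q))) \<partial>\<pi>)"
      by (simp only: cst_def Bochner_Integration.integral_diff[OF i_d i_G])
    also have "\<dots> \<le> 6*M*\<epsilon>"
    proof (rule integral_le_prob[OF prob, where B="2*M\<^sup>2"])
      show "(\<lambda>q. (dist (fst q) (snd q))\<^sup>2 - G (k (f (fst q))) (k (f (snd q)))) \<in> borel_measurable \<pi>"
        using m_d m_G by measurable
      fix q :: "'a \<times> 'a"
      obtain x x' where q: "q = (x, x')" by (cases q)
      have b1: "(dist x x')\<^sup>2 \<le> M\<^sup>2" by (simp add: MX power_mono)
      have b2: "0 \<le> G (k (f x)) (k (f x'))" "G (k (f x)) (k (f x')) \<le> M\<^sup>2" using Gb[of "k (f x)" "k (f x')"] by (auto simp: G_def)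
      show "\<bar>(dist (fst q) (snd q))\<^sup>2 - G (k (f (fst q))) (k (f (snd q)))\<bar> \<le> 2*M\<^sup>2"
        using b1 b2 zero_le_power2[of "dist x x'"] unfolding q abs_le_iff fst_conv snd_conv by linarith
      have t1: "dist (f x) (f x') \<le> dist (f x) (c (k (f x))) + dist (c (k (f x))) (f x')" by (rule dist_triangle)
      have t2: "dist (c (k (f x))) (f x') \<le> dist (c (k (f x))) (c (k (f x'))) + dist (c (k (f x'))) (f x')" by (rule dist_triangle)
      have t3: "dist (c (k (f x'))) (f x') < \<epsilon>" using kc[of "f x'"] by (simp add: dist_commute)
      have t4: "dist (f x) (c (k (f x))) < \<epsilon>" using kc[of "f x"] .
      have t5: "dist x x' \<le> dist (f x) (f x') + \<epsilon>" using approx[of x x'] by (simp add: abs_le_iff)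
      have "dist x x' \<le> dist (c (k (f x))) (c (k (f x'))) + 3*\<epsilon>" using t1 t2 t3 t4 t5 by linarith
      then have "(dist x x')\<^sup>2 \<le> (dist (c (k (f x))) (c (k (f x'))))\<^sup>2 + 2*M*(3*\<epsilon>)"
        by (intro sq_le) (auto simp: MX MY e0 less_imp_le)
      then show "(dist (fst q) (snd q))\<^sup>2 - G (k (f (fst q))) (k (f (snd q))) \<le> 6*M*\<epsilon>"
        unfolding q G_def by simp
    qed
    finally show ?thesis .
  qed
  have d: "(\<integral>q. G (k (fst q)) (k (snd q)) \<partial>\<pi>') - cst \<pi>' \<le> 4*M*\<epsilon>"
  proof -
    have "(\<integral>q. G (k (fst q)) (k (snd q)) \<partial>\<pi>') - cst \<pi>' =
        (\<integral>q. G (k (fst q)) (k (snd q)) - (dist (fst q) (snd q))\<^sup>2 \<partial>\<pi>')"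
      by (simp only: cst_def Bochner_Integration.integral_diff[OF i_G' i_d'])
    also have "\<dots> \<le> 4*M*\<epsilon>"
    proof (rule integral_le_prob[OF prob', where B="2*M\<^sup>2"])
      show "(\<lambda>q. G (k (fst q)) (k (snd q)) - (dist (fst q) (snd q))\<^sup>2) \<in> borel_measurable \<pi>'"
        using m_d' m_G' by measurable
      fix q :: "'b \<times> 'b"
      obtain y z where q: "q = (y, z)" by (cases q)
      have b1: "(dist y z)\<^sup>2 \<le> M\<^sup>2" by (simp add: MY power_mono)
      have b2: "0 \<le> G (k y) (k z)" "G (k y) (k z) \<le> M\<^sup>2" using Gb[of "k y" "k z"] by (auto simp: G_def)
      show "\<bar>G (k (fst q)) (k (snd q)) - (dist (fst q) (snd q))\<^sup>2\<bar> \<le> 2*M\<^sup>2"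
        using b1 b2 zero_le_power2[of "dist y z"] unfolding q abs_le_iff fst_conv snd_conv by linarith
      have t1: "dist (c (k y)) (c (k z)) \<le> dist (c (k y)) y + dist y (c (k z))" by (rule dist_triangle)
      have t2: "dist y (c (k z)) \<le> dist y z + dist z (c (k z))" by (rule dist_triangle)
      have t3: "dist (c (k y)) y < \<epsilon>" using kc[of y] by (simp add: dist_commute)
      have t4: "dist z (c (k z)) < \<epsilon>" using kc[of z] .
      have "dist (c (k y)) (c (k z)) \<le> dist y z + 2*\<epsilon>" using t1 t2 t3 t4 by linarith
      then have "(dist (c (k y)) (c (k z)))\<^sup>2 \<le> (dist y z)\<^sup>2 + 2*M*(2*\<epsilon>)"
        by (intro sq_le) (auto simp: MY e0 less_imp_le)
      then show "G (k (fst q)) (k (snd q)) - (dist (fst q) (snd q))\<^sup>2 \<le> 4*M*\<epsilon>"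
        unfolding q G_def by simp
    qed
    finally show ?thesis .
  qed
  have bc: "(\<integral>q. G (k (f (fst q))) (k (f (snd q))) \<partial>\<pi>) = (\<integral>q. G (k (fst q)) (k (snd q)) \<partial>\<pi>')"
  proof -
    have "(\<integral>q. G (k (f (fst q))) (k (f (snd q))) \<partial>\<pi>) = (\<integral>q. indicator UNIV q * G (k (f (fst q))) (k (f (snd q))) \<partial>\<pi>)"
      by simp
    also have "\<dots> = (\<Sum>i<N. \<Sum>j<N. G i j * measure \<pi> (UNIV \<inter> {q\<in>space \<pi>. k (f (fst q)) = i \<and> k (f (snd q)) = j}))"
      by (rule integral_index2[OF prob_fm[OF prob] h1 h2]) (auto simp: kN sp)
    also have "\<dots> = (\<Sum>i<N. \<Sum>j<N. G i j * measure \<pi>' (UNIV \<inter> {q\<in>space \<pi>'. k (fst q) = i \<and> k (snd q) = j}))"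
    proof (intro sum.cong refl)
      fix i j assume "i \<in> {..<N}" "j \<in> {..<N}"
      then have "measure \<pi> ({x. k (f x) = i} \<times> {x. k (f x) = j}) = measure \<pi>' ({y. k y = i} \<times> {y. k y = j})"
        by (intro ident) auto
      moreover have "UNIV \<inter> {q\<in>space \<pi>. k (f (fst q)) = i \<and> k (f (snd q)) = j} = {x. k (f x) = i} \<times> {x. k (f x) = j}"
        by (auto simp: spc)
      moreover have "UNIV \<inter> {q\<in>space \<pi>'. k (fst q) = i \<and> k (snd q) = j} = {y. k y = i} \<times> {y. k y = j}"
        by (auto simp: spc')
      ultimately show "G i j * measure \<pi> (UNIV \<inter> {q\<in>space \<pi>. k (f (fst q)) = i \<and> k (f (snd q)) = j}) =
          G i j * measure \<pi>' (UNIV \<inter> {q\<in>space \<pi>'. k (fst q) = i \<and> k (snd q) = j})" by simp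
    qed
    also have "\<dots> = (\<integral>q. indicator UNIV q * G (k (fst q)) (k (snd q)) \<partial>\<pi>')"
      by (rule integral_index2[OF prob_fm[OF prob'] g1 g2, symmetric]) (auto simp: kN sp')
    also have "\<dots> = (\<integral>q. G (k (fst q)) (k (snd q)) \<partial>\<pi>')" by simp
    finally show ?thesis .
  qed
  have "cst \<pi> \<le> cst \<pi>' + 10*M*\<epsilon>" using a d bc by linarith
  then show ?thesis using pi by blast
qed

lemma dense_cond:
  fixes f :: "'a::metric_space \<Rightarrow> 'b::metric_space"
  assumes cptB: "compact (UNIV :: 'b set)" and f: "f \<in> borel_measurable borel"
    and dense: "\<And>y. \<exists>x. dist (f x) y \<le> \<epsilon>" and e0: "0 < \<epsilon>" and Pn: "\<nu> \<in> P2"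
  shows "\<exists>\<mu>\<in>P2. W2 (push f \<mu>) \<nu> \<le> 2*\<epsilon>"
proof -
  obtain N :: nat and c :: "nat \<Rightarrow> 'b" and k :: "'b \<Rightarrow> nat" where kN: "\<And>y. k y < N" and kc: "\<And>y. dist y (c (k y)) < \<epsilon>"
    and k: "k \<in> measurable borel (count_space UNIV)"
    by (rule net_index[OF cptB e0]) blast
  have "\<forall>i. \<exists>x. dist (f x) (c i) \<le> \<epsilon>" using dense by blast
  then obtain xs where xs: "\<And>i. dist (f (xs i)) (c i) \<le> \<epsilon>" by metis
  define g where "g y = xs (k y)" for y
  have gm: "g \<in> borel_measurable borel" unfolding g_def[abs_def]
    by (rule measurable_compose_countable[where f="\<lambda>i y. xs i", OF _ k]) simp
  have gmn: "g \<in> measurable \<nu> borel" by (rule meas_sets_borel[OF P2_sets[OF Pn] gm])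
  define \<mu> where "\<mu> = distr \<nu> borel g"
  have Pm: "\<mu> \<in> P2" unfolding \<mu>_def P2_def using prob_space.prob_space_distr[OF P2_prob[OF Pn] gmn] by simp
  have "push f \<mu> = distr \<nu> borel (f \<circ> g)" unfolding \<mu>_def push_def by (rule distr_distr[OF f gmn])
  also have "f \<circ> g = (\<lambda>y. f (g y))" by (simp add: comp_def)
  finally have pf: "push f \<mu> = distr \<nu> borel (\<lambda>y. f (g y))" .
  have nid: "distr \<nu> borel (\<lambda>y. y) = \<nu>" by (rule distr_id2) (simp add: P2_sets[OF Pn])
  have fg: "(\<lambda>y. f (g y)) \<in> borel_measurable borel" using measurable_comp[OF gm f] by (simp add: comp_def)
  have idm: "(\<lambda>y::'b. y) \<in> borel_measurable borel" by simp
  have "W2 (distr \<nu> borel (\<lambda>y. f (g y))) (distr \<nu> borel (\<lambda>y. y)) \<le> 2*\<epsilon>"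
  proof (rule W2_pair_le[OF cptB Pn fg idm])
    fix y
    have "dist (f (g y)) y \<le> dist (f (g y)) (c (k y)) + dist (c (k y)) y" by (rule dist_triangle)
    moreover have "dist (f (g y)) (c (k y)) \<le> \<epsilon>" using xs[of "k y"] by (simp add: g_def)
    moreover have "dist (c (k y)) y < \<epsilon>" using kc[of y] by (simp add: dist_commute)
    ultimately show "dist (f (g y)) y \<le> 2*\<epsilon>" by linarith
  qed
  then have "W2 (push f \<mu>) \<nu> \<le> 2*\<epsilon>" unfolding pf nid .
  then show ?thesis using Pm by blast
qed

lemma push_push:
  assumes a: "a \<in> borel_measurable borel" and b: "b \<in> borel_measurable borel" and P: "\<mu> \<in> P2"
  shows "push a (push b \<mu>) = distr \<mu> borel (\<lambda>x. a (b x))"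
  unfolding push_def using distr_distr[OF a meas_sets_borel[OF P2_sets[OF P] b]] by (simp add: comp_def)

theorem lemma3p2:
  fixes GX :: "('a::metric_space \<Rightarrow> 'a) set" and GY :: "('b::metric_space \<Rightarrow> 'b) set"
  assumes "compact (UNIV :: 'a set)" and "compact (UNIV :: 'b set)"
    and "closed_isom_subgroup GX" and "closed_isom_subgroup GY"
  shows "\<exists>E :: real \<Rightarrow> real. (E \<longlongrightarrow> 0) (at_right 0) \<and>
           (\<forall>\<epsilon> (f :: 'a \<Rightarrow> 'b) \<theta> \<psi>.
              \<epsilon> > 0 \<and> f \<in> borel_measurable borel \<and>
              equivariant_approx dist UNIV GX dist UNIV GY f \<theta> \<psi> \<epsilon> \<longrightarrow>
              equivariant_approx W2 P2 (induced_group GX) W2 P2 (induced_group GY)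
                 (push f) (induced_hom GX \<theta>) (induced_hom GY \<psi>) (E \<epsilon>))"
proof -
  note cptA = assms(1) and cptB = assms(2)
  have "\<exists>D\<ge>0. \<forall>x y::'a. dist x y \<le> D" by (rule dist_bound[OF cptA]) auto
  then obtain DX where DX: "DX \<ge> 0" "\<And>x y::'a. dist x y \<le> DX" by blast
  have "\<exists>D\<ge>0. \<forall>x y::'b. dist x y \<le> D" by (rule dist_bound[OF cptB]) auto
  then obtain DY where DY: "DY \<ge> 0" "\<And>x y::'b. dist x y \<le> DY" by blast
  define M where "M = DX + DY"
  have MX: "\<And>x x'::'a. dist x x' \<le> M" using DX DY unfolding M_def by (meson add_increasing2 order_trans)
  have MY: "\<And>y y'::'b. dist y y' \<le> M" using DX DY unfolding M_def by (meson add_increasing order_trans)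
  have M0: "0 \<le> M" using DX DY by (simp add: M_def)
  define E where "E \<epsilon> = sqrt (10*M*\<epsilon>) + 2*\<epsilon>" for \<epsilon> :: real
  have lim: "(E \<longlongrightarrow> 0) (at_right 0)"
  proof -
    have "((\<lambda>\<epsilon>. sqrt (10*M*\<epsilon>) + 2*\<epsilon>) \<longlongrightarrow> sqrt (10*M*0) + 2*0) (at_right (0::real))"
      by (intro tendsto_intros)
    then show ?thesis by (simp add: E_def[abs_def])
  qed
  have GXI: "GX \<subseteq> Isom" "GY \<subseteq> Isom" using assms(3,4) by (auto simp: closed_isom_subgroup_def)
  have isom_meas: "g \<in> borel_measurable borel" if "g \<in> Isom" for g :: "'c::metric_space \<Rightarrow> 'c"
    by (rule borel_measurable_continuous_onI[OF isom_cont[OF that]])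
  show ?thesis
  proof (intro exI[of _ E] conjI lim allI impI)
    fix \<epsilon> :: real and f :: "'a \<Rightarrow> 'b" and \<theta> \<psi>
    assume H: "\<epsilon> > 0 \<and> f \<in> borel_measurable borel \<and> equivariant_approx dist UNIV GX dist UNIV GY f \<theta> \<psi> \<epsilon>"
    then have e0: "0 < \<epsilon>" and f: "f \<in> borel_measurable borel"
      and EA: "equivariant_approx dist UNIV GX dist UNIV GY f \<theta> \<psi> \<epsilon>" by auto
    from EA have thGX: "\<theta> ` GX \<subseteq> GY" and psGY: "\<psi> ` GY \<subseteq> GX"
      and approx: "\<And>x x'. \<bar>dist (f x) (f x') - dist x x'\<bar> \<le> \<epsilon>"
      and dense: "\<And>y. \<exists>x. dist (f x) y \<le> \<epsilon>"
      and eq1: "\<And>g x. g \<in> GX \<Longrightarrow> dist (\<theta> g (f x)) (f (g x)) \<le> \<epsilon>"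
      and eq2: "\<And>l x. l \<in> GY \<Longrightarrow> dist (l (f x)) (f (\<psi> l x)) \<le> \<epsilon>"
      unfolding equivariant_approx_def by auto
    have Ege: "2*\<epsilon> \<le> E \<epsilon>" "\<epsilon> \<le> E \<epsilon>" "sqrt (10*M*\<epsilon>) \<le> E \<epsilon>" using e0 M0 by (auto simp: E_def)
    show "equivariant_approx W2 P2 (induced_group GX) W2 P2 (induced_group GY)
                 (push f) (induced_hom GX \<theta>) (induced_hom GY \<psi>) (E \<epsilon>)"
      unfolding equivariant_approx_def
    proof (intro conjI ballI)
      show "push f ` P2 \<subseteq> P2" using push_P2[OF f] by auto
    next
      show "induced_hom GX \<theta> ` induced_group GX \<subseteq> induced_group GY"
      proof
        fix h assume "h \<in> induced_hom GX \<theta> ` induced_group GX"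
        then obtain g0 where g0: "g0 \<in> GX" "h = induced_hom GX \<theta> (push g0)" by (auto simp: induced_group_def)
        let ?g = "SOME g. g \<in> GX \<and> push g = push g0"
        have "?g \<in> GX \<and> push ?g = push g0" by (rule someI[of _ g0]) (simp add: g0)
        then show "h \<in> induced_group GY" using g0 thGX by (auto simp: induced_hom_def induced_group_def)
      qed
    next
      show "induced_hom GY \<psi> ` induced_group GY \<subseteq> induced_group GX"
      proof
        fix h assume "h \<in> induced_hom GY \<psi> ` induced_group GY"
        then obtain g0 where g0: "g0 \<in> GY" "h = induced_hom GY \<psi> (push g0)" by (auto simp: induced_group_def)
        let ?g = "SOME g. g \<in> GY \<and> push g = push g0"
        have "?g \<in> GY \<and> push ?g = push g0" by (rule someI[of _ g0]) (simp add: g0)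
        then show "h \<in> induced_group GX" using g0 psGY by (auto simp: induced_hom_def induced_group_def)
      qed
    next
      fix \<mu> \<nu> :: "'a measure" assume P: "\<mu> \<in> P2" "\<nu> \<in> P2"
      let ?C = "couplings \<mu> \<nu>" and ?C' = "couplings (push f \<mu>) (push f \<nu>)"
      let ?I = "Inf (cst ` ?C)" and ?I' = "Inf (cst ` ?C')"
      have ne: "?C \<noteq> {}" using couplings_ne[OF cptA P] by blast
      have ne': "?C' \<noteq> {}" using couplings_ne[OF cptB push_P2[OF f P(1)] push_P2[OF f P(2)]] by blast
      have e1: "?I' - 10*M*\<epsilon> \<le> ?I"
      proof (rule Inf_cst_ge[OF ne])
        fix \<pi> assume pi: "\<pi> \<in> ?C"
        obtain \<pi>' where pi': "\<pi>' \<in> ?C'" "cst \<pi>' \<le> cst \<pi> + 2*M*\<epsilon>"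
          using upper[OF cptA cptB f approx less_imp_le[OF e0] MX MY P pi] by blast
        have "?I' \<le> cst \<pi>'" by (rule Inf_cst_le[OF pi'(1)])
        moreover have "2*M*\<epsilon> \<le> 10*M*\<epsilon>" using M0 e0 by (simp add: mult_right_mono)
        ultimately show "?I' - 10*M*\<epsilon> \<le> cst \<pi>" using pi'(2) by linarith
      qed
      have e2: "?I - 10*M*\<epsilon> \<le> ?I'"
      proof (rule Inf_cst_ge[OF ne'])
        fix \<pi>' assume pi': "\<pi>' \<in> ?C'"
        obtain \<pi> where pi: "\<pi> \<in> ?C" "cst \<pi> \<le> cst \<pi>' + 10*M*\<epsilon>"
          using lower[OF cptA cptB f approx e0 MX MY P pi'] by blast
        have "?I \<le> cst \<pi>" by (rule Inf_cst_le[OF pi(1)])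
        then show "?I - 10*M*\<epsilon> \<le> cst \<pi>'" using pi(2) by linarith
      qed
      have "\<bar>sqrt ?I' - sqrt ?I\<bar> \<le> sqrt (10*M*\<epsilon>)"
        by (rule sqrt_diff_le[OF Inf_cst_nonneg[OF ne'] Inf_cst_nonneg[OF ne]]) (use e1 e2 in \<open>simp add: abs_le_iff\<close>)
      then show "\<bar>W2 (push f \<mu>) (push f \<nu>) - W2 \<mu> \<nu>\<bar> \<le> E \<epsilon>"
        using Ege(3) by (simp add: W2_cst)
    next
      fix \<nu> :: "'b measure" assume Pn: "\<nu> \<in> P2"
      obtain \<mu> where "\<mu> \<in> P2" "W2 (push f \<mu>) \<nu> \<le> 2*\<epsilon>"
        using dense_cond[OF cptB f dense e0 Pn] by blast
      then show "\<exists>\<mu>\<in>P2. W2 (push f \<mu>) \<nu> \<le> E \<epsilon>" using Ege(1) by force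
    next
      fix h and \<mu> :: "'a measure" assume h: "h \<in> induced_group GX" and P: "\<mu> \<in> P2"
      then obtain g0 where g0: "g0 \<in> GX" "h = push g0" by (auto simp: induced_group_def)
      define g where "g = (SOME g. g \<in> GX \<and> push g = push g0)"
      have g: "g \<in> GX" "push g = push g0" unfolding g_def by (rule someI2[of _ g0], simp add: g0, simp)+
      have ih: "induced_hom GX \<theta> h = push (\<theta> g)" by (simp add: induced_hom_def g0(2) g_def)
      have tg: "\<theta> g \<in> GY" using g(1) thGX by auto
      have tm: "\<theta> g \<in> borel_measurable borel" using tg GXI by (auto intro: isom_meas)
      have gm: "g \<in> borel_measurable borel" using g(1) GXI by (auto intro: isom_meas)
      have "W2 (distr \<mu> borel (\<lambda>x. \<theta> g (f x))) (distr \<mu> borel (\<lambda>x. f (g x))) \<le> \<epsilon>"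
        by (rule W2_pair_le[OF cptB P]) (use measurable_comp[OF f tm] measurable_comp[OF gm f] eq1[OF g(1)] in \<open>simp_all add: comp_def\<close>)
      moreover have "induced_hom GX \<theta> h (push f \<mu>) = distr \<mu> borel (\<lambda>x. \<theta> g (f x))"
        using ih push_push[OF tm f P] by simp
      moreover have "push f (h \<mu>) = distr \<mu> borel (\<lambda>x. f (g x))"
        using g0(2) g(2) push_push[OF f gm P] by simp
      ultimately show "W2 (induced_hom GX \<theta> h (push f \<mu>)) (push f (h \<mu>)) \<le> E \<epsilon>" using Ege(2) by simp
    next
      fix l and \<mu> :: "'a measure" assume l: "l \<in> induced_group GY" and P: "\<mu> \<in> P2"
      then obtain l0 where l0: "l0 \<in> GY" "l = push l0" by (auto simp: induced_group_def)
      define g where "g = (SOME g. g \<in> GY \<and> push g = push l0)"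
      have g: "g \<in> GY" "push g = push l0" unfolding g_def by (rule someI2[of _ l0], simp add: l0, simp)+
      have ih: "induced_hom GY \<psi> l = push (\<psi> g)" by (simp add: induced_hom_def l0(2) g_def)
      have tg: "\<psi> g \<in> GX" using g(1) psGY by auto
      have tm: "\<psi> g \<in> borel_measurable borel" using tg GXI by (auto intro: isom_meas)
      have gm: "g \<in> borel_measurable borel" using g(1) GXI by (auto intro: isom_meas)
      have "W2 (distr \<mu> borel (\<lambda>x. g (f x))) (distr \<mu> borel (\<lambda>x. f (\<psi> g x))) \<le> \<epsilon>"
        by (rule W2_pair_le[OF cptB P]) (use measurable_comp[OF f gm] measurable_comp[OF tm f] eq2[OF g(1)] in \<open>simp_all add: comp_def\<close>)
      moreover have "l (push f \<mu>) = distr \<mu> borel (\<lambda>x. g (f x))"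
        using l0(2) g(2) push_push[OF gm f P] by simp
      moreover have "push f (induced_hom GY \<psi> l \<mu>) = distr \<mu> borel (\<lambda>x. f (\<psi> g x))"
        using ih push_push[OF f tm P] by simp
      ultimately show "W2 (l (push f \<mu>)) (push f (induced_hom GY \<psi> l \<mu>)) \<le> E \<epsilon>" using Ege(2) by simp
    qed
  qed
qed

end
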